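(* Let $\zeta\in\Omega_n$ have rank $2$. For $J\in\mathbb N_0$ let $\Pi_J$ be the orthogonal projection onto the eigenspace of $\mathcal A$ with eigenvalue $J$. Then $\|\Pi_J|\zeta\rangle\|^2=\det(\mathbb 1-\zeta^*\zeta)\big(\tfrac12\operatorname{tr}(\zeta^*\zeta)\big)^J(J+1)$.
   Context: Let $A_a,B_a$ ($a=1,\dots,n$) be $2n$ independent bosonic annihilation operators on the Fock space with vacuum $|0\rangle$: $[A_a,A_b^\dagger]=[B_a,B_b^\dagger]=\delta_{ab}$, all other commutators vanishing, $A_a|0\rangle=B_a|0\rangle=0$. Define $E_{ab}=A_a^\dagger A_b+B_a^\dagger B_b+\delta_{ab}$, $\widetilde F_{ab}=B_a^\dagger A_b^\dagger-A_a^\dagger B_b^\dagger$, $\widetilde F_z=\sum_{a,b}z_{ab}\widetilde F_{ab}$, and the total area operator $\mathcal A=\sum_a\tfrac12(E_{aa}-1)$. Let $\Omega_n=\{\zeta\in M_n(\mathbb C):\zeta^{\mathsf T}=-\zeta,\ \zeta^*\zeta<\mathbb 1\}$ and $|\zeta\rangle=\det(\mathbb 1-\zeta^*\zeta)^{1/2}\exp(\tfrac12\widetilde F_\zeta)|0\rangle$. *)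

theory Defs
  imports "HOL-Analysis.Analysis"
begin

definition adjoint_mat :: "complex^'n^'m \<Rightarrow> complex^'m^'n" where
  "adjoint_mat M = (\<chi> i j. cnj (M $ j $ i))"

definition herm_form :: "complex^'n^'n \<Rightarrow> complex^'n \<Rightarrow> complex" where
  "herm_form M x = (\<Sum>i\<in>UNIV. cnj (x $ i) * ((M *v x) $ i))"

definition loewner_less :: "complex^'n^'n \<Rightarrow> complex^'n^'n \<Rightarrow> bool" where
  "loewner_less M N \<longleftrightarrow> (\<forall>x. x \<noteq> 0 \<longrightarrow> Re (herm_form (N - M) x) > 0 \<and> Im (herm_form (N - M) x) = 0)"

definition Omega :: "(complex^'n^'n) set" where
  "Omega = {z. transpose z = - z \<and> loewner_less (adjoint_mat z ** z) (mat 1)}"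

datatype 'n mode = ModeA 'n | ModeB 'n

type_synonym 'n occ = "'n mode \<Rightarrow> nat"
text \<open>A state is given by its coefficients in the orthonormal occupation-number
  basis |m>.\<close>
type_synonym 'n state = "'n occ \<Rightarrow> complex"

definition vac :: "'n state" where
  "vac m = (if m = (\<lambda>_. 0) then 1 else 0)"

definition basis_vec :: "'n occ \<Rightarrow> 'n state" where
  "basis_vec k m = (if m = k then 1 else 0)"

text \<open>Creation operator: c^dagger |m - e_i> = sqrt(m_i) |m>.\<close>
definition cre :: "'n mode \<Rightarrow> 'n state \<Rightarrow> 'n state" where
  "cre i \<psi> m = (if m i > 0 then complex_of_real (sqrt (real (m i))) * \<psi> (m(i := m i - 1)) else 0)"

text \<open>Annihilation operator: c |m + e_i> = sqrt(m_i + 1) |m>.\<close>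
definition ann :: "'n mode \<Rightarrow> 'n state \<Rightarrow> 'n state" where
  "ann i \<psi> m = complex_of_real (sqrt (real (m i + 1))) * \<psi> (m(i := m i + 1))"

definition E_op :: "'n \<Rightarrow> 'n \<Rightarrow> 'n state \<Rightarrow> 'n state" where
  "E_op a b \<psi> = (\<lambda>m. cre (ModeA a) (ann (ModeA b) \<psi>) m + cre (ModeB a) (ann (ModeB b) \<psi>) m
                     + (if a = b then \<psi> m else 0))"

definition Ft_op :: "'n \<Rightarrow> 'n \<Rightarrow> 'n state \<Rightarrow> 'n state" where
  "Ft_op a b \<psi> = (\<lambda>m. cre (ModeB a) (cre (ModeA b) \<psi>) m - cre (ModeA a) (cre (ModeB b) \<psi>) m)"

definition Ft_z :: "complex^'n^'n \<Rightarrow> 'n state \<Rightarrow> 'n state" where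
  "Ft_z z \<psi> = (\<lambda>m. \<Sum>a\<in>UNIV. \<Sum>b\<in>UNIV. z $ a $ b * Ft_op a b \<psi> m)"

definition area_op :: "'n::finite state \<Rightarrow> 'n state" where
  "area_op \<psi> = (\<lambda>m. \<Sum>a\<in>UNIV. (1/2) * (E_op a a \<psi> m - \<psi> m))"

definition exp_apply :: "('n state \<Rightarrow> 'n state) \<Rightarrow> 'n state \<Rightarrow> 'n state" where
  "exp_apply X v = (\<lambda>m. \<Sum>k. (X ^^ k) v m / of_nat (fact k))"

definition coh_state :: "complex^'n::finite^'n \<Rightarrow> 'n state" where
  "coh_state z = (\<lambda>m. complex_of_real (sqrt (Re (det (mat 1 - adjoint_mat z ** z))))
      * exp_apply (\<lambda>\<psi> m'. (1/2) * Ft_z z \<psi> m') vac m)"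

text \<open>The occupation-number basis is an orthonormal basis diagonalising the area operator, so the
  projection keeps exactly the coefficients of basis vectors lying in that eigenspace.\<close>
definition area_proj :: "nat \<Rightarrow> 'n::finite state \<Rightarrow> 'n state" where
  "area_proj J \<psi> = (\<lambda>m. if area_op (basis_vec m) = (\<lambda>m'. of_nat J * basis_vec m m') then \<psi> m else 0)"

definition norm_sq :: "'n state \<Rightarrow> real" where
  "norm_sq \<psi> = infsum (\<lambda>m. (cmod (\<psi> m))\<^sup>2) UNIV"

end

theory Submission
  imports Defs
begin


lemma UNIV_mode: "(UNIV :: 'n mode set) = range ModeA \<union> range ModeB"
  by (auto, case_tac x, auto)

instance mode :: (finite) finite
  by standard (simp add: UNIV_mode)

definition deg :: "'n::finite occ \<Rightarrow> nat" where "deg m = sum m UNIV"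

lemma deg_upd: "deg (m(i := k)) + m i = deg m + (k::nat)"
proof -
  have "deg m = m i + sum m (UNIV - {i})" unfolding deg_def by (rule sum.remove) auto
  moreover have "deg (m(i:=k)) = (m(i:=k)) i + sum (m(i:=k)) (UNIV - {i})" unfolding deg_def
    by (rule sum.remove) auto
  moreover have "sum (m(i:=k)) (UNIV - {i}) = sum m (UNIV - {i})" by (rule sum.cong) auto
  ultimately show ?thesis by simp
qed

definition hom :: "nat \<Rightarrow> 'n::finite state \<Rightarrow> bool" where
  "hom d \<psi> \<longleftrightarrow> (\<forall>m. deg m \<noteq> d \<longrightarrow> \<psi> m = 0)"

lemma cre_hom: "hom d \<psi> \<Longrightarrow> hom (Suc d) (cre i \<psi>)"
  unfolding hom_def
proof (intro allI impI)
  fix m :: "'a occ" assume h: "\<forall>m. deg m \<noteq> d \<longrightarrow> \<psi> m = 0" and m: "deg m \<noteq> Suc d"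
  show "cre i \<psi> m = 0"
  proof (cases "m i = 0")
    case False
    have "deg (m(i := m i - 1)) + m i = deg m + (m i - 1)" by (rule deg_upd)
    then have "deg (m(i := m i - 1)) \<noteq> d" using m False by linarith
    then show ?thesis using h by (simp add: cre_def)
  qed (simp add: cre_def)
qed

lemma vac_hom: "hom 0 (vac :: 'n::finite state)"
  unfolding hom_def vac_def deg_def by auto

lemma cre_cre: "cre i (cre j \<psi>) = cre j (cre i \<psi>)"
proof (rule ext)
  fix m :: "'a occ"
  show "cre i (cre j \<psi>) m = cre j (cre i \<psi>) m"
  proof (cases "i = j")
    case False
    have tw: "m(i := m i - Suc 0, j := m j - Suc 0) = m(j := m j - Suc 0, i := m i - Suc 0)" using False by (rule fun_upd_twist)
    have 1: "cre i (cre j \<psi>) m = (if 0 < m i then complex_of_real (sqrt (real (m i))) * (if 0 < m j then complex_of_real (sqrt (real (m j))) * \<psi> (m(i := m i - Suc 0, j := m j - Suc 0)) else 0) else 0)"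
      using False unfolding cre_def by simp
    have 2: "cre j (cre i \<psi>) m = (if 0 < m j then complex_of_real (sqrt (real (m j))) * (if 0 < m i then complex_of_real (sqrt (real (m i))) * \<psi> (m(j := m j - Suc 0, i := m i - Suc 0)) else 0) else 0)"
      using False unfolding cre_def by simp
    show ?thesis unfolding 1 2 tw
      by (cases "0 < m j"; cases "0 < m i") (simp_all only: if_True if_False mult_zero_right mult.left_commute)
  qed simp
qed

lemma ann_ann: "ann i (ann j \<psi>) = ann j (ann i \<psi>)"
proof (rule ext)
  fix m :: "'a occ"
  show "ann i (ann j \<psi>) m = ann j (ann i \<psi>) m"
  proof (cases "i = j")
    case False
    have tw: "m(i := Suc (m i), j := Suc (m j)) = m(j := Suc (m j), i := Suc (m i))" using False by (rule fun_upd_twist)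
    have 1: "ann i (ann j \<psi>) m = complex_of_real (sqrt (real (Suc (m i)))) * (complex_of_real (sqrt (real (Suc (m j)))) * \<psi> (m(i := Suc (m i), j := Suc (m j))))"
      using False unfolding ann_def by simp
    have 2: "ann j (ann i \<psi>) m = complex_of_real (sqrt (real (Suc (m j)))) * (complex_of_real (sqrt (real (Suc (m i)))) * \<psi> (m(j := Suc (m j), i := Suc (m i))))"
      using False unfolding ann_def by simp
    show ?thesis unfolding 1 2 tw by (simp only: mult.left_commute)
  qed simp
qed

lemma csqrt_sq: "complex_of_real (sqrt (real k)) * (complex_of_real (sqrt (real k)) * x) = of_nat k * x"
  by (simp add: mult.assoc[symmetric] flip: of_real_mult)

lemma cre_ann_same: "cre i (ann i \<psi>) m = of_nat (m i) * \<psi> m"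
proof (cases "m i")
  case (Suc k)
  then have "m(i := Suc k) = m" by auto
  then show ?thesis using Suc csqrt_sq[of "Suc k"] by (simp add: ann_def cre_def)
qed (simp add: cre_def)

lemma ann_cre: "ann i (cre j \<psi>) = (\<lambda>m. cre j (ann i \<psi>) m + (if i = j then \<psi> m else 0))"
proof (rule ext)
  fix m :: "'a occ"
  show "ann i (cre j \<psi>) m = cre j (ann i \<psi>) m + (if i = j then \<psi> m else 0)"
  proof (cases "i = j")
    case True
    have "ann j (cre j \<psi>) m = of_nat (Suc (m j)) * \<psi> m"
      using csqrt_sq[of "Suc (m j)" "\<psi> m"] by (simp add: ann_def cre_def)
    then show ?thesis using True by (simp add: cre_ann_same algebra_simps)
  next
    case False
    have tw: "m(i := Suc (m i), j := m j - Suc 0) = m(j := m j - Suc 0, i := Suc (m i))" using False by (rule fun_upd_twist)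
    have 1: "ann i (cre j \<psi>) m = complex_of_real (sqrt (real (m i + 1))) * (if 0 < m j then complex_of_real (sqrt (real (m j))) * \<psi> (m(j := m j - 1, i := m i + 1)) else 0)"
      using False unfolding ann_def cre_def by (simp add: tw)
    have 2: "cre j (ann i \<psi>) m = (if 0 < m j then complex_of_real (sqrt (real (m j))) * (complex_of_real (sqrt (real (m i + 1))) * \<psi> (m(j := m j - 1, i := m i + 1))) else 0)"
      using False unfolding ann_def cre_def by simp
    have 3: "(i = j) = False" using False by simp
    show ?thesis unfolding 1 2 3 if_False add_0_right
      by (cases "0 < m j") (simp_all only: if_True if_False mult_zero_right mult.left_commute)
  qed
qed

lemma ann_vac: "ann i vac = (\<lambda>m. 0)"
  by (rule ext) (auto simp: ann_def vac_def dest: fun_cong[of _ _ i])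

lemma cre_zero: "cre i (\<lambda>m. 0) = (\<lambda>m. 0)"
  by (rule ext) (simp add: cre_def)
lemma ann_zero: "ann i (\<lambda>m. 0) = (\<lambda>m. 0)"
  by (rule ext) (simp add: ann_def)

lemma cre_add: "cre i (\<lambda>m. f m + g m) = (\<lambda>m. cre i f m + cre i g m)"
  by (rule ext) (simp add: cre_def algebra_simps)
lemma ann_add: "ann i (\<lambda>m. f m + g m) = (\<lambda>m. ann i f m + ann i g m)"
  by (rule ext) (simp add: ann_def algebra_simps)
lemma cre_scal: "cre i (\<lambda>m. c * f m) = (\<lambda>m. c * cre i f m)"
  by (rule ext) (simp add: cre_def algebra_simps)
lemma ann_scal: "ann i (\<lambda>m. c * f m) = (\<lambda>m. c * ann i f m)"
  by (rule ext) (simp add: ann_def algebra_simps)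
lemma cre_sum: "cre i (\<lambda>m. \<Sum>x\<in>A. f x m) = (\<lambda>m. \<Sum>x\<in>A. cre i (f x) m)"
  by (rule ext) (simp add: cre_def sum_distrib_left)
lemma ann_sum: "ann i (\<lambda>m. \<Sum>x\<in>A. f x m) = (\<lambda>m. \<Sum>x\<in>A. ann i (f x) m)"
  by (rule ext) (simp add: ann_def sum_distrib_left)
lemma cre_if: "cre i (\<lambda>m. if P then f m else 0) = (\<lambda>m. if P then cre i f m else 0)"
  by (rule ext) (simp add: cre_def)
lemma ann_if: "ann i (\<lambda>m. if P then f m else 0) = (\<lambda>m. if P then ann i f m else 0)"
  by (rule ext) (simp add: ann_def)

lemma cre_eta: "cre i (\<lambda>m. f m) = cre i f" by simp



lemma four_op:
  "ann (ModeA b) (ann (ModeB a) (cre (ModeB c) (cre (ModeA d) \<psi>))) =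
   (\<lambda>m. cre (ModeB c) (cre (ModeA d) (ann (ModeA b) (ann (ModeB a) \<psi>))) m
        + (if b = d then cre (ModeB c) (ann (ModeB a) \<psi>) m else 0)
        + (if a = c then cre (ModeA d) (ann (ModeA b) \<psi>) m else 0)
        + (if a = c \<and> b = d then \<psi> m else 0))"
proof -
  have 1: "ann (ModeB a) (cre (ModeA d) \<psi>) = cre (ModeA d) (ann (ModeB a) \<psi>)"
    by (simp add: ann_cre)
  have 2: "ann (ModeB a) (cre (ModeB c) (cre (ModeA d) \<psi>)) =
     (\<lambda>m. cre (ModeB c) (cre (ModeA d) (ann (ModeB a) \<psi>)) m + (if a = c then cre (ModeA d) \<psi> m else 0))"
    by (simp add: ann_cre 1)
  show ?thesis
    unfolding 2 ann_add ann_if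
    by (rule ext) (simp add: ann_cre cre_add cre_if ann_ann[of "ModeA b"])
qed

definition Gop :: "complex^'n^'n \<Rightarrow> 'n::finite state \<Rightarrow> 'n state" where
  "Gop z \<psi> = (\<lambda>m. \<Sum>a\<in>UNIV. \<Sum>b\<in>UNIV. z$a$b * cre (ModeB a) (cre (ModeA b) \<psi>) m)"
definition Gdop :: "complex^'n^'n \<Rightarrow> 'n::finite state \<Rightarrow> 'n state" where
  "Gdop z \<psi> = (\<lambda>m. \<Sum>a\<in>UNIV. \<Sum>b\<in>UNIV. cnj (z$a$b) * ann (ModeA b) (ann (ModeB a) \<psi>) m)"
definition Kop :: "complex^'n^'n \<Rightarrow> 'n::finite state \<Rightarrow> 'n state" where
  "Kop z \<psi> = (\<lambda>m. (\<Sum>b\<in>UNIV. \<Sum>d\<in>UNIV. (adjoint_mat z ** z)$b$d * cre (ModeA d) (ann (ModeA b) \<psi>) m)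
     + (\<Sum>a\<in>UNIV. \<Sum>c\<in>UNIV. (z ** adjoint_mat z)$c$a * cre (ModeB c) (ann (ModeB a) \<psi>) m))"

lemma sum_if_out: "(\<Sum>d\<in>A. if P then f d else 0) = (if P then \<Sum>d\<in>A. f d else 0)"
  by (cases P) simp_all

lemma sum4_perm: "(\<Sum>c\<in>C. \<Sum>d\<in>D. \<Sum>a\<in>A. \<Sum>b\<in>B. f a b c d) = (\<Sum>a\<in>A. \<Sum>b\<in>B. \<Sum>c\<in>C. \<Sum>d\<in>D. f a b c d)"
proof -
  have "(\<Sum>c\<in>C. \<Sum>d\<in>D. \<Sum>a\<in>A. \<Sum>b\<in>B. f a b c d) = (\<Sum>c\<in>C. \<Sum>a\<in>A. \<Sum>d\<in>D. \<Sum>b\<in>B. f a b c d)"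
    by (rule sum.cong[OF refl], rule sum.swap)
  also have "\<dots> = (\<Sum>a\<in>A. \<Sum>c\<in>C. \<Sum>d\<in>D. \<Sum>b\<in>B. f a b c d)" by (rule sum.swap)
  also have "\<dots> = (\<Sum>a\<in>A. \<Sum>c\<in>C. \<Sum>b\<in>B. \<Sum>d\<in>D. f a b c d)"
    by (rule sum.cong[OF refl], rule sum.cong[OF refl], rule sum.swap)
  also have "\<dots> = (\<Sum>a\<in>A. \<Sum>b\<in>B. \<Sum>c\<in>C. \<Sum>d\<in>D. f a b c d)"
    by (rule sum.cong[OF refl], rule sum.swap)
  finally show ?thesis .
qed

lemma GdG: "Gdop z (Gop z \<psi>) m = Gop z (Gdop z \<psi>) m + trace (adjoint_mat z ** z) * \<psi> m + Kop z \<psi> m"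
proof -
  let ?T1 = "\<lambda>a b c d. cre (ModeB c) (cre (ModeA d) (ann (ModeA b) (ann (ModeB a) \<psi>))) m"
  let ?T2 = "\<lambda>a c. cre (ModeB c) (ann (ModeB a) \<psi>) m"
  let ?T3 = "\<lambda>b d. cre (ModeA d) (ann (ModeA b) \<psi>) m"
  have "Gdop z (Gop z \<psi>) m = (\<Sum>a\<in>UNIV. \<Sum>b\<in>UNIV. \<Sum>c\<in>UNIV. \<Sum>d\<in>UNIV. cnj (z$a$b) * z$c$d *
     (?T1 a b c d + (if b = d then ?T2 a c else 0) + (if a = c then ?T3 b d else 0)
        + (if a = c \<and> b = d then \<psi> m else 0)))"
    unfolding Gdop_def Gop_def ann_sum ann_scal four_op
    by (simp add: sum_distrib_left mult.assoc)
  also have "\<dots> = (\<Sum>a\<in>UNIV. \<Sum>b\<in>UNIV. \<Sum>c\<in>UNIV. \<Sum>d\<in>UNIV. cnj (z$a$b) * z$c$d * ?T1 a b c d)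
     + (\<Sum>a\<in>UNIV. \<Sum>b\<in>UNIV. \<Sum>c\<in>UNIV. \<Sum>d\<in>UNIV. if b = d then cnj (z$a$b) * z$c$d * ?T2 a c else 0)
     + (\<Sum>a\<in>UNIV. \<Sum>b\<in>UNIV. \<Sum>c\<in>UNIV. \<Sum>d\<in>UNIV. if a = c then cnj (z$a$b) * z$c$d * ?T3 b d else 0)
     + (\<Sum>a\<in>UNIV. \<Sum>b\<in>UNIV. \<Sum>c\<in>UNIV. \<Sum>d\<in>UNIV. if a = c \<and> b = d then cnj (z$a$b) * z$c$d * \<psi> m else 0)"
    by (simp only: distrib_left sum.distrib mult_zero_right if_distrib[of "\<lambda>x. _ * x"] cong: if_cong)
  also have "(\<Sum>a\<in>UNIV. \<Sum>b\<in>UNIV. \<Sum>c\<in>UNIV. \<Sum>d\<in>UNIV. if b = d then cnj (z$a$b) * z$c$d * ?T2 a c else 0)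
      = (\<Sum>a\<in>UNIV. \<Sum>c\<in>UNIV. (z ** adjoint_mat z)$c$a * ?T2 a c)"
  proof -
    have "(\<Sum>a\<in>UNIV. \<Sum>b\<in>UNIV. \<Sum>c\<in>UNIV. \<Sum>d\<in>UNIV. if b = d then cnj (z$a$b) * z$c$d * ?T2 a c else 0)
      = (\<Sum>a\<in>UNIV. \<Sum>b\<in>UNIV. \<Sum>c\<in>UNIV. cnj (z$a$b) * z$c$b * ?T2 a c)" by simp
    also have "\<dots> = (\<Sum>a\<in>UNIV. \<Sum>c\<in>UNIV. \<Sum>b\<in>UNIV. cnj (z$a$b) * z$c$b * ?T2 a c)"
      by (rule sum.cong[OF refl], rule sum.swap)
    also have "\<dots> = (\<Sum>a\<in>UNIV. \<Sum>c\<in>UNIV. (z ** adjoint_mat z)$c$a * ?T2 a c)"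
    proof (intro sum.cong refl)
      fix a c
      have "(z ** adjoint_mat z)$c$a * ?T2 a c = (\<Sum>b\<in>UNIV. z$c$b * cnj (z$a$b) * ?T2 a c)"
        by (simp add: matrix_matrix_mult_def adjoint_mat_def sum_distrib_right)
      also have "\<dots> = (\<Sum>b\<in>UNIV. cnj (z$a$b) * z$c$b * ?T2 a c)"
        by (rule sum.cong, rule refl, simp add: mult_ac)
      finally show "(\<Sum>b\<in>UNIV. cnj (z$a$b) * z$c$b * ?T2 a c) = (z ** adjoint_mat z)$c$a * ?T2 a c" by simp
    qed
    finally show ?thesis .
  qed
  also have "(\<Sum>a\<in>UNIV. \<Sum>b\<in>UNIV. \<Sum>c\<in>UNIV. \<Sum>d\<in>UNIV. if a = c then cnj (z$a$b) * z$c$d * ?T3 b d else 0)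
      = (\<Sum>b\<in>UNIV. \<Sum>d\<in>UNIV. (adjoint_mat z ** z)$b$d * ?T3 b d)"
  proof -
    have "(\<Sum>a\<in>UNIV. \<Sum>b\<in>UNIV. \<Sum>c\<in>UNIV. \<Sum>d\<in>UNIV. if a = c then cnj (z$a$b) * z$c$d * ?T3 b d else 0)
      = (\<Sum>a\<in>UNIV. \<Sum>b\<in>UNIV. \<Sum>d\<in>UNIV. cnj (z$a$b) * z$a$d * ?T3 b d)" by (simp add: sum_if_out)
    also have "\<dots> = (\<Sum>b\<in>UNIV. \<Sum>a\<in>UNIV. \<Sum>d\<in>UNIV. cnj (z$a$b) * z$a$d * ?T3 b d)"
      by (rule sum.swap)
    also have "\<dots> = (\<Sum>b\<in>UNIV. \<Sum>d\<in>UNIV. \<Sum>a\<in>UNIV. cnj (z$a$b) * z$a$d * ?T3 b d)"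
      by (rule sum.cong[OF refl], rule sum.swap)
    also have "\<dots> = (\<Sum>b\<in>UNIV. \<Sum>d\<in>UNIV. (adjoint_mat z ** z)$b$d * ?T3 b d)"
    proof (intro sum.cong refl)
      fix b d
      have "(adjoint_mat z ** z)$b$d * ?T3 b d = (\<Sum>a\<in>UNIV. cnj (z$a$b) * z$a$d * ?T3 b d)"
        by (simp add: matrix_matrix_mult_def adjoint_mat_def sum_distrib_right)
      then show "(\<Sum>a\<in>UNIV. cnj (z$a$b) * z$a$d * ?T3 b d) = (adjoint_mat z ** z)$b$d * ?T3 b d" by simp
    qed
    finally show ?thesis .
  qed
  also have "(\<Sum>a\<in>UNIV. \<Sum>b\<in>UNIV. \<Sum>c\<in>UNIV. \<Sum>d\<in>UNIV. if a = c \<and> b = d then cnj (z$a$b) * z$c$d * \<psi> m else 0)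
      = trace (adjoint_mat z ** z) * \<psi> m"
  proof -
    have e: "(if a = c \<and> b = d then x else 0) = (if a = c then (if b = d then x else 0) else 0)" for a b c d and x :: complex
      by simp
    have "(\<Sum>a\<in>UNIV. \<Sum>b\<in>UNIV. \<Sum>c\<in>UNIV. \<Sum>d\<in>UNIV. if a = c \<and> b = d then cnj (z$a$b) * z$c$d * \<psi> m else 0)
      = (\<Sum>a\<in>UNIV. \<Sum>b\<in>UNIV. cnj (z$a$b) * z$a$b * \<psi> m)" by (simp add: e sum_if_out)
    also have "\<dots> = (\<Sum>b\<in>UNIV. \<Sum>a\<in>UNIV. cnj (z$a$b) * z$a$b * \<psi> m)" by (rule sum.swap)
    also have "\<dots> = trace (adjoint_mat z ** z) * \<psi> m"
      by (simp add: trace_def matrix_matrix_mult_def adjoint_mat_def sum_distrib_right)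
    finally show ?thesis .
  qed
  also have "(\<Sum>a\<in>UNIV. \<Sum>b\<in>UNIV. \<Sum>c\<in>UNIV. \<Sum>d\<in>UNIV. cnj (z$a$b) * z$c$d * ?T1 a b c d) = Gop z (Gdop z \<psi>) m"
  proof -
    have r: "(x::complex) * (y * t) = y * x * t" for x y t by (simp add: mult_ac)
    have "Gop z (Gdop z \<psi>) m = (\<Sum>c\<in>UNIV. \<Sum>d\<in>UNIV. z$c$d * (\<Sum>a\<in>UNIV. \<Sum>b\<in>UNIV. cnj (z$a$b) * ?T1 a b c d))"
      unfolding Gdop_def Gop_def cre_sum cre_scal by (rule refl)
    also have "\<dots> = (\<Sum>c\<in>UNIV. \<Sum>d\<in>UNIV. \<Sum>a\<in>UNIV. \<Sum>b\<in>UNIV. cnj (z$a$b) * z$c$d * ?T1 a b c d)"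
      by (simp only: sum_distrib_left r)
    finally have gg: "Gop z (Gdop z \<psi>) m = (\<Sum>c\<in>UNIV. \<Sum>d\<in>UNIV. \<Sum>a\<in>UNIV. \<Sum>b\<in>UNIV. cnj (z$a$b) * z$c$d * ?T1 a b c d)" .
    show ?thesis unfolding gg by (rule sum4_perm[symmetric])
  qed
  finally show ?thesis unfolding Kop_def by (simp add: algebra_simps)
qed


lemma opA: "cre (ModeA d) (ann (ModeA b) (cre (ModeB c) (cre (ModeA e) \<psi>))) =
  (\<lambda>m. cre (ModeB c) (cre (ModeA e) (cre (ModeA d) (ann (ModeA b) \<psi>))) m + (if b = e then cre (ModeB c) (cre (ModeA d) \<psi>) m else 0))"
proof -
  have h1: "ann (ModeA b) (cre (ModeB c) (cre (ModeA e) \<psi>)) = (\<lambda>m. cre (ModeB c) (cre (ModeA e) (ann (ModeA b) \<psi>)) m + (if b = e then cre (ModeB c) \<psi> m else 0))"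
    by (simp add: ann_cre cre_add cre_if)
  show ?thesis
    by (simp only: h1 cre_add cre_if cre_cre[of "ModeA d" "ModeB c"] cre_cre[of "ModeA d" "ModeA e"])
qed

lemma opB: "cre (ModeB c) (ann (ModeB a) (cre (ModeB e) (cre (ModeA d) \<psi>))) =
  (\<lambda>m. cre (ModeB e) (cre (ModeA d) (cre (ModeB c) (ann (ModeB a) \<psi>))) m + (if a = e then cre (ModeB c) (cre (ModeA d) \<psi>) m else 0))"
proof -
  have h0: "ann (ModeB a) (cre (ModeA d) \<psi>) = cre (ModeA d) (ann (ModeB a) \<psi>)"
    by (simp add: ann_cre)
  have h2: "ann (ModeB a) (cre (ModeB e) (cre (ModeA d) \<psi>)) = (\<lambda>m. cre (ModeB e) (cre (ModeA d) (ann (ModeB a) \<psi>)) m + (if a = e then cre (ModeA d) \<psi> m else 0))"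
    by (simp add: ann_cre h0)
  show ?thesis
    by (simp only: h2 cre_add cre_if cre_cre[of "ModeB c" "ModeB e"] cre_cre[of "ModeB c" "ModeA d"])
qed

definition KA :: "complex^'n^'n \<Rightarrow> 'n::finite state \<Rightarrow> 'n state" where
  "KA z \<psi> = (\<lambda>m. \<Sum>b\<in>UNIV. \<Sum>d\<in>UNIV. (adjoint_mat z ** z)$b$d * cre (ModeA d) (ann (ModeA b) \<psi>) m)"
definition KB :: "complex^'n^'n \<Rightarrow> 'n::finite state \<Rightarrow> 'n state" where
  "KB z \<psi> = (\<lambda>m. \<Sum>a\<in>UNIV. \<Sum>c\<in>UNIV. (z ** adjoint_mat z)$c$a * cre (ModeB c) (ann (ModeB a) \<psi>) m)"

lemma Kop_split: "Kop z \<psi> = (\<lambda>m. KA z \<psi> m + KB z \<psi> m)"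
  unfolding Kop_def KA_def KB_def by (rule refl)

lemma KAG: "KA z (Gop z \<psi>) m = Gop z (KA z \<psi>) m + (\<Sum>c\<in>UNIV. \<Sum>d\<in>UNIV. (z ** (adjoint_mat z ** z))$c$d * cre (ModeB c) (cre (ModeA d) \<psi>) m)"
proof -
  let ?M = "adjoint_mat z ** z"
  let ?P = "\<lambda>b d c e. cre (ModeB c) (cre (ModeA e) (cre (ModeA d) (ann (ModeA b) \<psi>))) m"
  let ?Q = "\<lambda>c d. cre (ModeB c) (cre (ModeA d) \<psi>) m"
  have r: "(x::complex) * (y * t) = y * x * t" for x y t by (simp add: mult_ac)
  have "KA z (Gop z \<psi>) m = (\<Sum>b\<in>UNIV. \<Sum>d\<in>UNIV. \<Sum>c\<in>UNIV. \<Sum>e\<in>UNIV. ?M$b$d * (z$c$e * (?P b d c e + (if b = e then ?Q c d else 0))))"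
    unfolding KA_def Gop_def ann_sum ann_scal cre_sum cre_scal opA
    by (simp add: sum_distrib_left)
  also have "\<dots> = (\<Sum>b\<in>UNIV. \<Sum>d\<in>UNIV. \<Sum>c\<in>UNIV. \<Sum>e\<in>UNIV. z$c$e * (?M$b$d * ?P b d c e))
      + (\<Sum>b\<in>UNIV. \<Sum>d\<in>UNIV. \<Sum>c\<in>UNIV. \<Sum>e\<in>UNIV. if b = e then ?M$b$d * z$c$e * ?Q c d else 0)"
    by (simp only: distrib_left sum.distrib mult_zero_right if_distrib[of "\<lambda>x. _ * x"] mult.assoc mult.left_commute[of "?M$_$_"] cong: if_cong)
  also have "(\<Sum>b\<in>UNIV. \<Sum>d\<in>UNIV. \<Sum>c\<in>UNIV. \<Sum>e\<in>UNIV. z$c$e * (?M$b$d * ?P b d c e)) = Gop z (KA z \<psi>) m"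
  proof -
    have gg: "Gop z (KA z \<psi>) m = (\<Sum>c\<in>UNIV. \<Sum>e\<in>UNIV. \<Sum>b\<in>UNIV. \<Sum>d\<in>UNIV. z$c$e * (?M$b$d * ?P b d c e))"
      unfolding KA_def Gop_def cre_sum cre_scal by (simp only: sum_distrib_left)
    show ?thesis unfolding gg by (rule sum4_perm[symmetric])
  qed
  also have "(\<Sum>b\<in>UNIV. \<Sum>d\<in>UNIV. \<Sum>c\<in>UNIV. \<Sum>e\<in>UNIV. if b = e then ?M$b$d * z$c$e * ?Q c d else 0)
     = (\<Sum>c\<in>UNIV. \<Sum>d\<in>UNIV. (z ** ?M)$c$d * ?Q c d)"
  proof -
    have "(\<Sum>b\<in>UNIV. \<Sum>d\<in>UNIV. \<Sum>c\<in>UNIV. \<Sum>e\<in>UNIV. if b = e then ?M$b$d * z$c$e * ?Q c d else 0)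
      = (\<Sum>b\<in>UNIV. \<Sum>d\<in>UNIV. \<Sum>c\<in>UNIV. ?M$b$d * z$c$b * ?Q c d)" by simp
    also have "\<dots> = (\<Sum>d\<in>UNIV. \<Sum>b\<in>UNIV. \<Sum>c\<in>UNIV. ?M$b$d * z$c$b * ?Q c d)" by (rule sum.swap)
    also have "\<dots> = (\<Sum>d\<in>UNIV. \<Sum>c\<in>UNIV. \<Sum>b\<in>UNIV. ?M$b$d * z$c$b * ?Q c d)"
      by (rule sum.cong[OF refl], rule sum.swap)
    also have "\<dots> = (\<Sum>c\<in>UNIV. \<Sum>d\<in>UNIV. \<Sum>b\<in>UNIV. ?M$b$d * z$c$b * ?Q c d)" by (rule sum.swap)
    also have "\<dots> = (\<Sum>c\<in>UNIV. \<Sum>d\<in>UNIV. (z ** ?M)$c$d * ?Q c d)"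
    proof (intro sum.cong refl)
      fix c d
      have "(z ** ?M)$c$d * ?Q c d = (\<Sum>b\<in>UNIV. z$c$b * ?M$b$d * ?Q c d)"
        by (simp only: matrix_matrix_mult_def vec_lambda_beta sum_distrib_right)
      also have "\<dots> = (\<Sum>b\<in>UNIV. ?M$b$d * z$c$b * ?Q c d)"
        by (rule sum.cong, rule refl, simp only: mult.commute)
      finally show "(\<Sum>b\<in>UNIV. ?M$b$d * z$c$b * ?Q c d) = (z ** ?M)$c$d * ?Q c d" by (rule sym)
    qed
    finally show ?thesis .
  qed
  finally show ?thesis .
qed


lemma KBG: "KB z (Gop z \<psi>) m = Gop z (KB z \<psi>) m + (\<Sum>c\<in>UNIV. \<Sum>d\<in>UNIV. ((z ** adjoint_mat z) ** z)$c$d * cre (ModeB c) (cre (ModeA d) \<psi>) m)"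
proof -
  let ?N = "z ** adjoint_mat z"
  let ?P = "\<lambda>a c e d. cre (ModeB e) (cre (ModeA d) (cre (ModeB c) (ann (ModeB a) \<psi>))) m"
  let ?Q = "\<lambda>c d. cre (ModeB c) (cre (ModeA d) \<psi>) m"
  have "KB z (Gop z \<psi>) m = (\<Sum>a\<in>UNIV. \<Sum>c\<in>UNIV. \<Sum>e\<in>UNIV. \<Sum>d\<in>UNIV. ?N$c$a * (z$e$d * (?P a c e d + (if a = e then ?Q c d else 0))))"
    unfolding KB_def Gop_def ann_sum ann_scal cre_sum cre_scal opB
    by (simp add: sum_distrib_left)
  also have "\<dots> = (\<Sum>a\<in>UNIV. \<Sum>c\<in>UNIV. \<Sum>e\<in>UNIV. \<Sum>d\<in>UNIV. z$e$d * (?N$c$a * ?P a c e d))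
      + (\<Sum>a\<in>UNIV. \<Sum>c\<in>UNIV. \<Sum>e\<in>UNIV. \<Sum>d\<in>UNIV. if a = e then ?N$c$a * z$e$d * ?Q c d else 0)"
    by (simp only: distrib_left sum.distrib mult_zero_right if_distrib[of "\<lambda>x. _ * x"] mult.assoc mult.left_commute[of "?N$_$_"] cong: if_cong)
  also have "(\<Sum>a\<in>UNIV. \<Sum>c\<in>UNIV. \<Sum>e\<in>UNIV. \<Sum>d\<in>UNIV. z$e$d * (?N$c$a * ?P a c e d)) = Gop z (KB z \<psi>) m"
  proof -
    have gg: "Gop z (KB z \<psi>) m = (\<Sum>e\<in>UNIV. \<Sum>d\<in>UNIV. \<Sum>a\<in>UNIV. \<Sum>c\<in>UNIV. z$e$d * (?N$c$a * ?P a c e d))"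
      unfolding KB_def Gop_def cre_sum cre_scal by (simp only: sum_distrib_left)
    show ?thesis unfolding gg by (rule sum4_perm[symmetric])
  qed
  also have "(\<Sum>a\<in>UNIV. \<Sum>c\<in>UNIV. \<Sum>e\<in>UNIV. \<Sum>d\<in>UNIV. if a = e then ?N$c$a * z$e$d * ?Q c d else 0)
     = (\<Sum>c\<in>UNIV. \<Sum>d\<in>UNIV. (?N ** z)$c$d * ?Q c d)"
  proof -
    have "(\<Sum>a\<in>UNIV. \<Sum>c\<in>UNIV. \<Sum>e\<in>UNIV. \<Sum>d\<in>UNIV. if a = e then ?N$c$a * z$e$d * ?Q c d else 0)
      = (\<Sum>a\<in>UNIV. \<Sum>c\<in>UNIV. \<Sum>d\<in>UNIV. ?N$c$a * z$a$d * ?Q c d)" by (simp add: sum_if_out)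
    also have "\<dots> = (\<Sum>c\<in>UNIV. \<Sum>a\<in>UNIV. \<Sum>d\<in>UNIV. ?N$c$a * z$a$d * ?Q c d)" by (rule sum.swap)
    also have "\<dots> = (\<Sum>c\<in>UNIV. \<Sum>d\<in>UNIV. \<Sum>a\<in>UNIV. ?N$c$a * z$a$d * ?Q c d)"
      by (rule sum.cong[OF refl], rule sum.swap)
    also have "\<dots> = (\<Sum>c\<in>UNIV. \<Sum>d\<in>UNIV. (?N ** z)$c$d * ?Q c d)"
      by (simp only: matrix_matrix_mult_def vec_lambda_beta sum_distrib_right)
    finally show ?thesis .
  qed
  finally show ?thesis .
qed

lemma Gop_scal: "Gop z (\<lambda>m. c * f m) = (\<lambda>m. c * Gop z f m)"
  unfolding Gop_def cre_scal by (simp add: sum_distrib_left mult_ac)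

lemma Gop_add: "Gop z (\<lambda>m. f m + g m) = (\<lambda>m. Gop z f m + Gop z g m)"
  unfolding Gop_def cre_add by (simp add: distrib_left sum.distrib)

lemma Gop_hom: "hom d \<psi> \<Longrightarrow> hom (Suc (Suc d)) (Gop z \<psi>)"
proof -
  assume h: "hom d \<psi>"
  have "hom (Suc (Suc d)) (cre (ModeB a) (cre (ModeA b) \<psi>))" for a b
    by (intro cre_hom h)
  then show ?thesis unfolding hom_def Gop_def by simp
qed

lemma Gdop_vac: "Gdop z vac = (\<lambda>m. 0)"
  unfolding Gdop_def by (simp add: ann_vac ann_zero)

lemma KA_vac: "KA z vac = (\<lambda>m. 0)"
  unfolding KA_def by (simp add: ann_vac cre_zero)
lemma KB_vac: "KB z vac = (\<lambda>m. 0)"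
  unfolding KB_def by (simp add: ann_vac cre_zero)


section \<open>Recursion for K and Gd on the powers\<close>

lemma Gop_zero: "Gop z (\<lambda>m. 0) = (\<lambda>m. 0)"
  unfolding Gop_def by (simp add: cre_zero)

lemma K_pow:
  assumes hz: "\<And>c d. (z ** (adjoint_mat z ** z))$c$d = lam * z$c$d"
  shows "Kop z ((Gop z ^^ J) vac) = (\<lambda>m. 2 * lam * of_nat J * (Gop z ^^ J) vac m)"
proof (induction J)
  case 0
  show ?case by (simp add: Kop_split KA_vac KB_vac)
next
  case (Suc J)
  let ?v = "(Gop z ^^ J) vac"
  have hz2: "((z ** adjoint_mat z) ** z)$c$d = lam * z$c$d" for c d
    using hz by (simp add: matrix_mul_assoc)
  have ex: "(\<Sum>c\<in>UNIV. \<Sum>d\<in>UNIV. (lam * z$c$d) * cre (ModeB c) (cre (ModeA d) ?v) m) = lam * Gop z ?v m" for m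
    unfolding Gop_def by (simp add: sum_distrib_left mult.assoc)
  have "Kop z (Gop z ?v) m = 2 * lam * of_nat (Suc J) * Gop z ?v m" for m
  proof -
    have "Kop z (Gop z ?v) m = Gop z (KA z ?v) m + Gop z (KB z ?v) m + 2 * lam * Gop z ?v m"
      unfolding Kop_split KAG KBG hz hz2 ex by simp
    also have "Gop z (KA z ?v) m + Gop z (KB z ?v) m = Gop z (Kop z ?v) m"
      unfolding Kop_split Gop_add by simp
    also have "Gop z (Kop z ?v) m = 2 * lam * of_nat J * Gop z ?v m"
      unfolding Suc.IH Gop_scal by simp
    finally show ?thesis by (simp add: algebra_simps)
  qed
  then show ?case by (simp add: fun_eq_iff)
qed

lemma Gd_pow:
  assumes hz: "\<And>c d. (z ** (adjoint_mat z ** z))$c$d = lam * z$c$d"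
    and ht: "trace (adjoint_mat z ** z) = 2 * lam"
  shows "Gdop z ((Gop z ^^ Suc J) vac) = (\<lambda>m. lam * of_nat (Suc J) * of_nat (Suc (Suc J)) * (Gop z ^^ J) vac m)"
proof (induction J)
  case 0
  show ?case
    by (rule ext) (simp add: GdG Gdop_vac Gop_zero ht Kop_split KA_vac KB_vac)
next
  case (Suc J)
  let ?v = "(Gop z ^^ Suc J) vac"
  have "Gdop z (Gop z ?v) m = lam * of_nat (Suc (Suc J)) * of_nat (Suc (Suc (Suc J))) * ?v m" for m
  proof -
    have "Gdop z (Gop z ?v) m = Gop z (Gdop z ?v) m + 2 * lam * ?v m + 2 * lam * of_nat (Suc J) * ?v m"
      unfolding GdG ht K_pow[OF hz] by simp
    also have "Gop z (Gdop z ?v) m = lam * of_nat (Suc J) * of_nat (Suc (Suc J)) * ?v m"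
      unfolding Suc.IH Gop_scal by simp
    finally show ?thesis by (simp add: algebra_simps)
  qed
  then show ?case by (simp add: fun_eq_iff)
qed

section \<open>Inner product on homogeneous components\<close>

definition ip :: "nat \<Rightarrow> 'n::finite state \<Rightarrow> 'n state \<Rightarrow> complex" where
  "ip d \<psi> \<phi> = (\<Sum>m\<in>{m. deg m = d}. cnj (\<psi> m) * \<phi> m)"

lemma finite_deg: "finite {m :: 'n::finite occ. deg m = d}"
proof (rule finite_subset)
  show "{m :: 'n occ. deg m = d} \<subseteq> Pi\<^sub>E UNIV (\<lambda>_. {..d})"
  proof
    fix m :: "'n occ" assume "m \<in> {m. deg m = d}"
    then have "m i \<le> d" for i unfolding deg_def
      using member_le_sum[of i UNIV m] by auto
    then show "m \<in> Pi\<^sub>E UNIV (\<lambda>_. {..d})" by (simp add: PiE_UNIV_domain)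
  qed
  show "finite (Pi\<^sub>E (UNIV :: 'n mode set) (\<lambda>_. {..d}))" by (rule finite_PiE) auto
qed

lemma ip_sum_left: "ip d (\<lambda>m. \<Sum>x\<in>A. f x m) \<phi> = (\<Sum>x\<in>A. ip d (f x) \<phi>)"
  unfolding ip_def by (simp add: cnj_sum sum_distrib_right sum.swap[of _ "{m. deg m = d}"])
lemma ip_sum_right: "ip d \<phi> (\<lambda>m. \<Sum>x\<in>A. f x m) = (\<Sum>x\<in>A. ip d \<phi> (f x))"
  unfolding ip_def by (simp add: sum_distrib_left sum.swap[of _ "{m. deg m = d}"])
lemma ip_scal_left: "ip d (\<lambda>m. c * f m) \<phi> = cnj c * ip d f \<phi>"
  unfolding ip_def by (simp add: sum_distrib_left mult.assoc)
lemma ip_scal_right: "ip d \<phi> (\<lambda>m. c * f m) = c * ip d \<phi> f"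
  unfolding ip_def by (simp add: sum_distrib_left mult_ac)

lemma ip_cre:
  "ip (Suc d) (cre i \<psi>) \<phi> = ip d \<psi> (ann i \<phi>)"
proof -
  let ?S = "{m :: 'a occ. deg m = Suc d}"
  let ?g = "\<lambda>m. complex_of_real (sqrt (real (m i))) * cnj (\<psi> (m(i := m i - 1))) * \<phi> m"
  have "ip (Suc d) (cre i \<psi>) \<phi> = (\<Sum>m\<in>?S. if 0 < m i then ?g m else 0)"
    unfolding ip_def cre_def by (rule sum.cong) auto
  also have "\<dots> = (\<Sum>m\<in>{m\<in>?S. 0 < m i}. ?g m)"
    by (rule sum.inter_filter[symmetric]) (rule finite_deg)
  also have "\<dots> = (\<Sum>m\<in>{m. deg m = d}. cnj (\<psi> m) * ann i \<phi> m)"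
  proof (rule sum.reindex_bij_witness[where i = "\<lambda>m. m(i := m i + 1)" and j = "\<lambda>m. m(i := m i - 1)"])
    fix a :: "'a occ" assume a: "a \<in> {m \<in> ?S. 0 < m i}"
    show "a(i := a i - 1, i := (a(i := a i - 1)) i + 1) = a" using a by auto
    have "deg (a(i := a i - 1)) + a i = deg a + (a i - 1)" by (rule deg_upd)
    then show "a(i := a i - 1) \<in> {m. deg m = d}" using a by auto
    show "cnj (\<psi> (a(i := a i - 1))) * ann i \<phi> (a(i := a i - 1)) = ?g a"
      using a by (simp add: ann_def mult_ac)
  next
    fix b :: "'a occ" assume b: "b \<in> {m. deg m = d}"
    show "b(i := b i + 1, i := (b(i := b i + 1)) i - 1) = b" by auto
    have "deg (b(i := b i + 1)) + b i = deg b + (b i + 1)" by (rule deg_upd)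
    then show "b(i := b i + 1) \<in> {m \<in> ?S. 0 < m i}" using b by auto
  qed
  finally show ?thesis unfolding ip_def .
qed

lemma ip_G: "ip (Suc (Suc d)) (Gop z \<psi>) \<phi> = ip d \<psi> (Gdop z \<phi>)"
  unfolding Gop_def Gdop_def ip_sum_left ip_sum_right ip_scal_left ip_scal_right ip_cre
  by (simp add: ann_ann)

lemma deg0: "deg m = 0 \<longleftrightarrow> m = (\<lambda>_. 0)"
  unfolding deg_def by (auto simp: fun_eq_iff)

lemma ip_vac: "ip 0 vac vac = 1"
proof -
  have "{m :: 'a occ. deg m = 0} = {\<lambda>_. 0}" using deg0 by auto
  then show ?thesis unfolding ip_def by (simp add: vac_def)
qed

lemma norm_pow:
  assumes hz: "\<And>c d. (z ** (adjoint_mat z ** z))$c$d = lam * z$c$d"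
    and ht: "trace (adjoint_mat z ** z) = 2 * lam"
  shows "ip (2 * J) ((Gop z ^^ J) vac) ((Gop z ^^ J) vac) = lam ^ J * of_nat (fact J) * of_nat (fact (Suc J))"
proof (induction J)
  case 0
  show ?case by (simp add: ip_vac)
next
  case (Suc J)
  have "ip (2 * Suc J) ((Gop z ^^ Suc J) vac) ((Gop z ^^ Suc J) vac)
      = ip (2 * J) ((Gop z ^^ J) vac) (Gdop z ((Gop z ^^ Suc J) vac))"
    by (simp add: ip_G)
  also have "\<dots> = lam * of_nat (Suc J) * of_nat (Suc (Suc J)) * ip (2 * J) ((Gop z ^^ J) vac) ((Gop z ^^ J) vac)"
    unfolding Gd_pow[OF hz ht] ip_scal_right by simp
  finally show ?case unfolding Suc.IH by (simp add: algebra_simps)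
qed


lemma Ft_z_G:
  assumes anti: "\<And>a b. z$b$a = - z$a$b"
  shows "(\<lambda>\<psi> m'. (1/2) * Ft_z z \<psi> m') = Gop z"
proof (intro ext)
  fix \<psi> :: "'a state" and m
  have "(\<Sum>a\<in>UNIV. \<Sum>b\<in>UNIV. z$a$b * cre (ModeA a) (cre (ModeB b) \<psi>) m)
      = (\<Sum>b\<in>UNIV. \<Sum>a\<in>UNIV. z$a$b * cre (ModeA a) (cre (ModeB b) \<psi>) m)" by (rule sum.swap)
  also have "\<dots> = (\<Sum>b\<in>UNIV. \<Sum>a\<in>UNIV. - (z$b$a * cre (ModeB b) (cre (ModeA a) \<psi>) m))"
  proof (intro sum.cong refl)
    fix a b
    show "z$a$b * cre (ModeA a) (cre (ModeB b) \<psi>) m = - (z$b$a * cre (ModeB b) (cre (ModeA a) \<psi>) m)"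
      unfolding anti[of b a] cre_cre[of "ModeA a" "ModeB b"] by simp
  qed
  also have "\<dots> = - Gop z \<psi> m" unfolding Gop_def by (simp add: sum_negf)
  finally have "(\<Sum>a\<in>UNIV. \<Sum>b\<in>UNIV. z$a$b * cre (ModeA a) (cre (ModeB b) \<psi>) m) = - Gop z \<psi> m" .
  then show "(1/2) * Ft_z z \<psi> m = Gop z \<psi> m"
    unfolding Ft_z_def Ft_op_def by (simp add: right_diff_distrib sum_subtractf) (simp add: Gop_def)
qed

lemma pow_hom: "hom (2 * k) ((Gop z ^^ k) vac)"
  by (induction k) (simp_all add: vac_hom Gop_hom)

lemma exp_apply_G:
  assumes anti: "\<And>a b. z$b$a = - z$a$b" and dm: "deg m = 2 * J"
  shows "exp_apply (\<lambda>\<psi> m'. (1/2) * Ft_z z \<psi> m') vac m = (Gop z ^^ J) vac m / of_nat (fact J)"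
proof -
  have "(\<lambda>k. (Gop z ^^ k) vac m / of_nat (fact k)) = (\<lambda>k. if k = J then (Gop z ^^ J) vac m / of_nat (fact J) else 0)"
  proof (rule ext)
    fix k show "(Gop z ^^ k) vac m / of_nat (fact k) = (if k = J then (Gop z ^^ J) vac m / of_nat (fact J) else 0)"
      using pow_hom[of k z] dm unfolding hom_def by auto
  qed
  then have "(\<lambda>k. (Gop z ^^ k) vac m / of_nat (fact k)) sums ((Gop z ^^ J) vac m / of_nat (fact J))"
    using sums_single[of J "\<lambda>_. (Gop z ^^ J) vac m / of_nat (fact J)"] by simp
  then show ?thesis unfolding exp_apply_def Ft_z_G[OF anti] by (simp add: sums_iff)
qed

lemma deg_split: "deg m = (\<Sum>a\<in>UNIV. m (ModeA a)) + (\<Sum>a\<in>UNIV. m (ModeB a))"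
proof -
  have "deg m = sum m (range ModeA) + sum m (range ModeB)"
    unfolding deg_def UNIV_mode by (rule sum.union_disjoint) auto
  also have "sum m (range ModeA) = (\<Sum>a\<in>UNIV. m (ModeA a))"
    by (subst sum.reindex) (auto simp: inj_def)
  also have "sum m (range ModeB) = (\<Sum>a\<in>UNIV. m (ModeB a))"
    by (subst sum.reindex) (auto simp: inj_def)
  finally show ?thesis .
qed

lemma area_op_basis: "area_op (basis_vec k) = (\<lambda>m. of_nat (deg m) / 2 * basis_vec k m)"
proof (rule ext)
  fix m :: "'a occ"
  have "area_op (basis_vec k) m = (\<Sum>a\<in>UNIV. (1/2) * (of_nat (m (ModeA a)) + of_nat (m (ModeB a))) * basis_vec k m)"
    unfolding area_op_def E_op_def by (simp add: cre_ann_same algebra_simps)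
  also have "\<dots> = (1/2) * of_nat (deg m) * basis_vec k m"
    unfolding deg_split of_nat_add of_nat_sum
    by (simp only: sum_distrib_right[symmetric] sum_distrib_left[symmetric] sum.distrib)
  finally show "area_op (basis_vec k) m = of_nat (deg m) / 2 * basis_vec k m" by simp
qed

lemma area_proj_eq: "area_proj J \<psi> m = (if deg m = 2 * J then \<psi> m else 0)"
proof -
  have "(area_op (basis_vec m) = (\<lambda>m'. of_nat J * basis_vec m m')) \<longleftrightarrow> deg m = 2 * J"
  proof
    assume "area_op (basis_vec m) = (\<lambda>m'. of_nat J * basis_vec m m')"
    then have "of_nat (deg m) / 2 * basis_vec m m = (of_nat J :: complex) * basis_vec m m"
      unfolding area_op_basis by (rule fun_cong)
    then have "(of_nat (deg m) :: complex) = of_nat (2 * J)" by (simp add: basis_vec_def field_simps)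
    then show "deg m = 2 * J" by (simp only: of_nat_eq_iff)
  next
    assume d: "deg m = 2 * J"
    show "area_op (basis_vec m) = (\<lambda>m'. of_nat J * basis_vec m m')"
      unfolding area_op_basis
    proof (rule ext)
      fix m'
      show "of_nat (deg m') / 2 * basis_vec m m' = of_nat J * basis_vec m m'"
        using d by (cases "m' = m") (simp_all add: basis_vec_def)
    qed
  qed
  then show ?thesis unfolding area_proj_def by simp
qed

lemma main_fock:
  assumes anti: "\<And>a b. z$b$a = - z$a$b"
    and hz: "\<And>c d. (z ** (adjoint_mat z ** z))$c$d = lam * z$c$d"
    and ht: "trace (adjoint_mat z ** z) = 2 * lam"
    and DIm: "Im (det (mat 1 - adjoint_mat z ** z)) = 0"
    and DRe: "Re (det (mat 1 - adjoint_mat z ** z)) \<ge> 0"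
  shows "complex_of_real (norm_sq (area_proj J (coh_state z)))
           = det (mat 1 - adjoint_mat z ** z) * lam ^ J * of_nat (J + 1)"
proof -
  let ?D = "det (mat 1 - adjoint_mat z ** z)"
  let ?v = "(Gop z ^^ J) vac"
  let ?S = "{m :: 'a occ. deg m = 2 * J}"
  have coh: "coh_state z m = complex_of_real (sqrt (Re ?D)) * (?v m / of_nat (fact J))" if "deg m = 2 * J" for m
    unfolding coh_state_def exp_apply_G[OF anti that] by simp
  have "norm_sq (area_proj J (coh_state z)) = infsum (\<lambda>m. (cmod (area_proj J (coh_state z) m))\<^sup>2) ?S"
    unfolding norm_sq_def by (rule infsum_cong_neutral) (auto simp: area_proj_eq)
  also have "\<dots> = (\<Sum>m\<in>?S. (cmod (area_proj J (coh_state z) m))\<^sup>2)"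
    by (rule infsum_finite) (rule finite_deg)
  also have "\<dots> = (\<Sum>m\<in>?S. Re ?D * (cmod (?v m))\<^sup>2 / (fact J)\<^sup>2)"
  proof (rule sum.cong[OF refl])
    fix m assume "m \<in> ?S"
    then have "area_proj J (coh_state z) m = complex_of_real (sqrt (Re ?D)) * (?v m / of_nat (fact J))"
      by (simp add: area_proj_eq coh)
    then show "(cmod (area_proj J (coh_state z) m))\<^sup>2 = Re ?D * (cmod (?v m))\<^sup>2 / (fact J)\<^sup>2"
      using DRe by (simp add: norm_mult norm_divide power_mult_distrib power_divide)
  qed
  finally have ns: "norm_sq (area_proj J (coh_state z)) = Re ?D / (fact J)\<^sup>2 * (\<Sum>m\<in>?S. (cmod (?v m))\<^sup>2)"
    by (simp add: sum_distrib_left sum_divide_distrib)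
  have ipr: "complex_of_real (\<Sum>m\<in>?S. (cmod (?v m))\<^sup>2) = ip (2 * J) ?v ?v"
    unfolding ip_def of_real_sum complex_norm_square by (simp add: mult.commute)
  have Dc: "complex_of_real (Re ?D) = ?D" using DIm by (simp add: complex_eq_iff)
  have "complex_of_real (norm_sq (area_proj J (coh_state z)))
      = complex_of_real (Re ?D) / (fact J)\<^sup>2 * complex_of_real (\<Sum>m\<in>?S. (cmod (?v m))\<^sup>2)"
    unfolding ns by simp
  also have "\<dots> = ?D / (fact J)\<^sup>2 * ip (2 * J) ?v ?v" unfolding Dc ipr ..
  also have "\<dots> = ?D / (fact J)\<^sup>2 * (lam ^ J * of_nat (fact J) * of_nat (fact (Suc J)))"
    unfolding norm_pow[OF hz ht] ..
  also have "\<dots> = ?D * lam ^ J * of_nat (J + 1)"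
    by (simp add: power2_eq_square field_simps)
  finally show ?thesis .
qed


section \<open>The rank-two identity\<close>

lemma rank2_identity:
  fixes z :: "complex^'n::finite^'n"
  assumes zf: "\<And>i j. z$i$j = x i * y j - y i * x j"
  shows "(z ** (adjoint_mat z ** z))$c$d = (trace (adjoint_mat z ** z) / 2) * z$c$d"
proof -
  define Sxx where "Sxx = (\<Sum>k\<in>UNIV. cnj (x k) * x k)"
  define Syy where "Syy = (\<Sum>k\<in>UNIV. cnj (y k) * y k)"
  define Sxy where "Sxy = (\<Sum>k\<in>UNIV. cnj (x k) * y k)"
  define Syx where "Syx = (\<Sum>k\<in>UNIV. cnj (y k) * x k)"
  let ?M = "adjoint_mat z ** z"
  have MF: "?M$b$d = cnj (y b) * y d * Sxx - cnj (y b) * x d * Sxy - cnj (x b) * y d * Syx + cnj (x b) * x d * Syy" for b d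
  proof -
    have "?M$b$d = (\<Sum>a\<in>UNIV. cnj (z$a$b) * z$a$d)" by (simp add: matrix_matrix_mult_def adjoint_mat_def)
    also have "\<dots> = (\<Sum>a\<in>UNIV. cnj (y b) * y d * (cnj (x a) * x a) - cnj (y b) * x d * (cnj (x a) * y a)
         - cnj (x b) * y d * (cnj (y a) * x a) + cnj (x b) * x d * (cnj (y a) * y a))"
      by (rule sum.cong) (simp_all add: zf algebra_simps)
    also have "\<dots> = cnj (y b) * y d * Sxx - cnj (y b) * x d * Sxy - cnj (x b) * y d * Syx + cnj (x b) * x d * Syy"
      unfolding Sxx_def Syy_def Sxy_def Syx_def by (simp only: sum.distrib sum_subtractf sum_distrib_left)
    finally show ?thesis .
  qed
  have YM: "(\<Sum>b\<in>UNIV. y b * ?M$b$d) = y d * (Sxx * Syy - Sxy * Syx)" for d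
  proof -
    have "(\<Sum>b\<in>UNIV. y b * ?M$b$d) = (\<Sum>b\<in>UNIV. (y d * Sxx) * (cnj (y b) * y b) - (x d * Sxy) * (cnj (y b) * y b)
         - (y d * Syx) * (cnj (x b) * y b) + (x d * Syy) * (cnj (x b) * y b))"
      by (rule sum.cong) (simp_all add: MF algebra_simps)
    also have "\<dots> = (y d * Sxx) * (\<Sum>b\<in>UNIV. cnj (y b) * y b) - (x d * Sxy) * (\<Sum>b\<in>UNIV. cnj (y b) * y b)
         - (y d * Syx) * (\<Sum>b\<in>UNIV. cnj (x b) * y b) + (x d * Syy) * (\<Sum>b\<in>UNIV. cnj (x b) * y b)"
      by (simp only: sum.distrib sum_subtractf sum_distrib_left)
    also have "\<dots> = y d * (Sxx * Syy - Sxy * Syx)"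
      unfolding Syy_def[symmetric] Sxy_def[symmetric] by (simp add: algebra_simps)
    finally show ?thesis .
  qed
  have XM: "(\<Sum>b\<in>UNIV. x b * ?M$b$d) = x d * (Sxx * Syy - Sxy * Syx)" for d
  proof -
    have "(\<Sum>b\<in>UNIV. x b * ?M$b$d) = (\<Sum>b\<in>UNIV. (y d * Sxx) * (cnj (y b) * x b) - (x d * Sxy) * (cnj (y b) * x b)
         - (y d * Syx) * (cnj (x b) * x b) + (x d * Syy) * (cnj (x b) * x b))"
      by (rule sum.cong) (simp_all add: MF algebra_simps)
    also have "\<dots> = (y d * Sxx) * (\<Sum>b\<in>UNIV. cnj (y b) * x b) - (x d * Sxy) * (\<Sum>b\<in>UNIV. cnj (y b) * x b)
         - (y d * Syx) * (\<Sum>b\<in>UNIV. cnj (x b) * x b) + (x d * Syy) * (\<Sum>b\<in>UNIV. cnj (x b) * x b)"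
      by (simp only: sum.distrib sum_subtractf sum_distrib_left)
    also have "\<dots> = x d * (Sxx * Syy - Sxy * Syx)"
      unfolding Syx_def[symmetric] Sxx_def[symmetric] by (simp add: algebra_simps)
    finally show ?thesis .
  qed
  have tr: "trace ?M = 2 * (Sxx * Syy - Sxy * Syx)"
  proof -
    have "trace ?M = (\<Sum>b\<in>UNIV. Sxx * (cnj (y b) * y b) - Sxy * (cnj (y b) * x b) - Syx * (cnj (x b) * y b) + Syy * (cnj (x b) * x b))"
      unfolding trace_def by (rule sum.cong) (simp_all add: MF algebra_simps)
    also have "\<dots> = Sxx * (\<Sum>b\<in>UNIV. cnj (y b) * y b) - Sxy * (\<Sum>b\<in>UNIV. cnj (y b) * x b)
         - Syx * (\<Sum>b\<in>UNIV. cnj (x b) * y b) + Syy * (\<Sum>b\<in>UNIV. cnj (x b) * x b)"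
      by (simp only: sum.distrib sum_subtractf sum_distrib_left)
    also have "\<dots> = 2 * (Sxx * Syy - Sxy * Syx)"
      unfolding Syx_def[symmetric] Sxx_def[symmetric] Syy_def[symmetric] Sxy_def[symmetric] by (simp add: algebra_simps)
    finally show ?thesis .
  qed
  have "(z ** ?M)$c$d = (\<Sum>b\<in>UNIV. (x c * y b - y c * x b) * ?M$b$d)"
    by (simp add: matrix_matrix_mult_def zf)
  also have "\<dots> = x c * (\<Sum>b\<in>UNIV. y b * ?M$b$d) - y c * (\<Sum>b\<in>UNIV. x b * ?M$b$d)"
    by (simp add: sum_distrib_left sum_subtractf[symmetric] algebra_simps)
  also have "\<dots> = (Sxx * Syy - Sxy * Syx) * z$c$d"
    unfolding YM XM zf by (simp add: algebra_simps)
  finally show ?thesis unfolding tr by simp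
qed


lemma rank2_form:
  fixes z :: "complex^'n::finite^'n"
  assumes anti: "\<And>a b. z$b$a = - z$a$b" and rk: "rank z = 2"
  shows "\<exists>x y. \<forall>i j. z$i$j = x i * y j - y i * x j"
proof -
  obtain B where B: "B \<subseteq> rows z" "vec.independent B" "rows z \<subseteq> vec.span B" "card B = vec.dim (rows z)"
    by (rule vec.basis_exists)
  then have "card B = 2" using rk by (simp add: row_rank_def_gen)
  then obtain u w where uw: "B = {u, w}" by (auto simp: card_2_iff)
  obtain p where p: "u = row p z" using B(1) uw by (auto simp: rows_def)
  obtain q where q: "w = row q z" using B(1) uw by (auto simp: rows_def)
  have "\<forall>i. \<exists>k l. row i z = k *s u + l *s w"
  proof
    fix i
    have "row i z \<in> vec.span {u, w}" using B(3) uw by (auto simp: rows_def)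
    then obtain k where "row i z - k *s u \<in> vec.span {w}" using vec.span_breakdown_eq[of "row i z" u "{w}"] by blast
    then obtain l where "row i z - k *s u = l *s w" using vec.span_singleton[of w] by auto
    then have "row i z = k *s u + l *s w" by (simp add: algebra_simps)
    then show "\<exists>k l. row i z = k *s u + l *s w" by blast
  qed
  then obtain \<alpha> \<beta> where ab: "\<And>i. row i z = \<alpha> i *s u + \<beta> i *s w" by metis
  have E: "z$i$j = \<alpha> i * z$p$j + \<beta> i * z$q$j" for i j
    using arg_cong[OF ab[of i], of "\<lambda>v. v$j"] by (simp add: p q row_def)
  have diag: "z$i$i = 0" for i using anti[of i i] by simp
  let ?c = "z$p$q"
  have Ep: "z$p$j = \<beta> j * ?c" for j
  proof -
    have "z$p$j = - z$j$p" using anti[of j p] by simp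
    also have "\<dots> = - (\<beta> j * z$q$p)" using E[of j p] diag[of p] by simp
    also have "\<dots> = \<beta> j * ?c" using anti[of q p] by simp
    finally show ?thesis .
  qed
  have Eq: "z$q$j = - (\<alpha> j * ?c)" for j
  proof -
    have "z$q$j = - z$j$q" using anti[of j q] by simp
    also have "\<dots> = - (\<alpha> j * ?c)" using E[of j q] diag[of q] by simp
    finally show ?thesis .
  qed
  have F: "z$i$j = (?c * \<alpha> i) * \<beta> j - \<beta> i * (?c * \<alpha> j)" for i j
    using E[of i j] Ep[of j] Eq[of j] by (simp add: algebra_simps)
  define x' where "x' = (\<lambda>i. ?c * \<alpha> i)"
  have "\<forall>i j. z$i$j = x' i * \<beta> j - \<beta> i * x' j" unfolding x'_def using F by blast
  then show ?thesis by blast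
qed


section \<open>Positivity of the determinant\<close>

lemma det_adj: "det (adjoint_mat (A :: complex^'n::finite^'n)) = cnj (det A)"
proof -
  have "adjoint_mat A = transpose (\<chi> i j. cnj (A$i$j))"
    by (simp add: adjoint_mat_def transpose_def vec_eq_iff)
  then have "det (adjoint_mat A) = det ((\<chi> i j. cnj (A$i$j)) :: complex^'n^'n)"
    by (simp add: det_transpose)
  also have "\<dots> = cnj (det A)"
    unfolding det_def by (simp add: cnj_sum cnj_prod)
  finally show ?thesis .
qed

lemma sum_delta_mult: "(\<Sum>j\<in>UNIV. (if i = j then 1 else 0) * (g j :: complex)) = g (i::'n::finite)"
proof -
  have "(\<Sum>j\<in>UNIV. (if i = j then 1 else 0) * g j) = (\<Sum>j\<in>UNIV. if i = j then g j else 0)"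
    by (rule sum.cong) auto
  also have "\<dots> = g i" using sum.delta'[of UNIV i g] by simp
  finally show ?thesis .
qed

lemma det_pos:
  fixes Q :: "complex^'n::finite^'n"
  assumes herm: "\<And>i j. cnj (Q$j$i) = Q$i$j"
   and pd: "\<And>x. x \<noteq> 0 \<Longrightarrow> Re (herm_form (mat 1 - Q) x) > 0"
  shows "Im (det (mat 1 - Q)) = 0 \<and> Re (det (mat 1 - Q)) > 0"
proof -
  define H where "H = (\<lambda>t::real. (\<chi> i j. mat 1 $ i $ j - complex_of_real t * Q$i$j) :: complex^'n^'n)"
  have H1: "H 1 = mat 1 - Q" by (simp add: H_def vec_eq_iff)
  have Hadj: "adjoint_mat (H t) = H t" for t
    by (simp add: H_def adjoint_mat_def vec_eq_iff mat_def herm)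
  have Him: "Im (det (H t)) = 0" for t
  proof -
    have "cnj (det (H t)) = det (H t)" using det_adj[of "H t"] Hadj[of t] by simp
    then show ?thesis by (simp add: complex_eq_iff)
  qed
  have Hv: "(H t *v x)$i = x$i - complex_of_real t * (Q *v x)$i" for t x i
    by (simp add: H_def matrix_vector_mult_def mat_def left_diff_distrib sum_subtractf sum_distrib_left mult.assoc sum_delta_mult)
  have hf: "herm_form (H t) x = (\<Sum>i\<in>UNIV. cnj (x$i) * x$i) - complex_of_real t * herm_form Q x" for t x
    unfolding herm_form_def Hv by (simp add: right_diff_distrib sum_subtractf sum_distrib_left mult_ac)
  have Pp: "Re (\<Sum>i\<in>UNIV. cnj (x$i) * x$i) > 0" if x0: "x \<noteq> 0" for x :: "complex^'n"
  proof -
    obtain k where k: "x$k \<noteq> 0" using x0 by (auto simp: vec_eq_iff)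
    have "Re (\<Sum>i\<in>UNIV. cnj (x$i) * x$i) = (\<Sum>i\<in>UNIV. (cmod (x$i))\<^sup>2)"
      by (simp add: Re_sum cmod_power2 power2_eq_square[symmetric])
    also have "\<dots> > 0"
      by (rule sum_pos2[of UNIV k]) (use k in auto)
    finally show ?thesis .
  qed
  have posH: "Re (herm_form (H t) x) > 0" if "0 \<le> t" "t \<le> 1" "x \<noteq> 0" for t x
  proof -
    have a: "Re (herm_form (H 1) x) > 0" using pd[OF \<open>x \<noteq> 0\<close>] H1 by simp
    have "Re (herm_form (H t) x) = (1 - t) * Re (\<Sum>i\<in>UNIV. cnj (x$i) * x$i) + t * Re (herm_form (H 1) x)"
      unfolding hf by (simp add: algebra_simps)
    also have "\<dots> > 0"
    proof (cases "t = 1")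
      case True then show ?thesis using a by simp
    next
      case False
      then have "(1 - t) * Re (\<Sum>i\<in>UNIV. cnj (x$i) * x$i) > 0" using that Pp[OF \<open>x \<noteq> 0\<close>] by simp
      moreover have "t * Re (herm_form (H 1) x) \<ge> 0" using a that by simp
      ultimately show ?thesis by linarith
    qed
    finally show ?thesis .
  qed
  have nz: "det (H t) \<noteq> 0" if "0 \<le> t" "t \<le> 1" for t
  proof
    assume "det (H t) = 0"
    then have "\<not> inj ((*v) (H t))"
      using det_nz_iff_inj_gen[OF matrix_vector_mul_linear_gen, of "H t"] by simp
    then obtain a b where ab: "a \<noteq> b" "H t *v a = H t *v b" unfolding inj_def by blast
    let ?x = "a - b"
    have x0: "?x \<noteq> 0" using ab by simp
    have "H t *v ?x = 0" using ab by (simp add: matrix_vector_mult_diff_distrib)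
    then have "herm_form (H t) ?x = 0" by (simp add: herm_form_def)
    then show False using posH[OF that x0] by simp
  qed
  define f where "f = (\<lambda>t::real. Re (det (H t)))"
  have cont: "isCont f t" for t
  proof -
    have "isCont (\<lambda>t. det (H t)) t"
      unfolding H_def det_def by (simp only: vec_lambda_beta) (intro continuous_intros)
    then show ?thesis unfolding f_def continuous_complex_iff by simp
  qed
  have f0: "f 0 = 1" by (simp add: f_def H_def mat_def det_I[unfolded mat_def])
  have f1: "f 1 > 0"
  proof (rule ccontr)
    assume "\<not> f 1 > 0"
    then have "f 1 \<le> 0" by simp
    then obtain t where t: "0 \<le> t" "t \<le> 1" "f t = 0"
      using IVT2[of f 1 0 0] f0 cont by auto
    then have "det (H t) = 0" using Him[of t] by (simp add: f_def complex_eq_iff)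
    then show False using nz[OF t(1,2)] by simp
  qed
  show ?thesis using Him[of 1] f1 unfolding f_def H1 by simp
qed


theorem mainTheorem18:
  fixes z :: "complex^'n::finite^'n" and J :: nat
  assumes "z \<in> Omega" and "rank z = 2"
  shows "complex_of_real (norm_sq (area_proj J (coh_state z)))
           = det (mat 1 - adjoint_mat z ** z) * (trace (adjoint_mat z ** z) / 2) ^ J * of_nat (J + 1)"
proof -
  have tz: "transpose z = - z" and ll: "loewner_less (adjoint_mat z ** z) (mat 1)"
    using assms(1) by (auto simp: Omega_def)
  have anti: "z$b$a = - z$a$b" for a b
  proof -
    have "(transpose z)$a$b = (- z)$a$b" using tz by simp
    then show ?thesis by (simp add: transpose_def)
  qed
  obtain x y where xy: "\<forall>i j. z$i$j = x i * y j - y i * x j"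
    using rank2_form[OF anti assms(2)] by blast
  have hz: "(z ** (adjoint_mat z ** z))$c$d = (trace (adjoint_mat z ** z) / 2) * z$c$d" for c d
    by (rule rank2_identity[of z x y]) (use xy in blast)
  have ht: "trace (adjoint_mat z ** z) = 2 * (trace (adjoint_mat z ** z) / 2)" by simp
  have herm: "cnj ((adjoint_mat z ** z)$j$i) = (adjoint_mat z ** z)$i$j" for i j
    by (simp add: matrix_matrix_mult_def adjoint_mat_def cnj_sum mult.commute)
  have pd: "Re (herm_form (mat 1 - adjoint_mat z ** z) v) > 0" if "v \<noteq> 0" for v
    using ll that unfolding loewner_less_def by blast
  have D: "Im (det (mat 1 - adjoint_mat z ** z)) = 0 \<and> Re (det (mat 1 - adjoint_mat z ** z)) > 0"
    by (rule det_pos[OF herm pd])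
  show ?thesis
    by (rule main_fock[OF anti hz ht]) (use D in auto)
qed

end
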